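(* For every $N$, there exists a map $f:\mathcal D_N\to\{0,1\}$ that is the restriction to $\mathcal D_N$ of a linear function on $\mathbb R^N$, such that every function $\bar f:\{0,1\}^N\to\{0,1\}$ agreeing with $f$ on $\mathcal D_N$ has degree at least $\Omega(\log N)$.
   Context: $\mathcal D_N=\{e_1,\dots,e_N\}\subseteq\{0,1\}^N$ is the set of standard basis vectors. The degree of a Boolean function $\bar f:\{0,1\}^N\to\{0,1\}$ is the degree of its unique multilinear polynomial representation. *)

theory Defs
  imports Complex_Main
begin

text \<open>Points of R^N are modelled as functions nat => real vanishing at indices >= N.\<close>

definition cube :: "nat \<Rightarrow> (nat \<Rightarrow> real) set" where
  "cube N = {x. (\<forall>i<N. x i = 0 \<or> x i = 1) \<and> (\<forall>i\<ge>N. x i = 0)}"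

definition basis_vec :: "nat \<Rightarrow> (nat \<Rightarrow> real)" where
  "basis_vec i = (\<lambda>j. if j = i then 1 else 0)"

text \<open>D_N = {e_1, ..., e_N} (indices 0..N-1).\<close>
definition DN :: "nat \<Rightarrow> (nat \<Rightarrow> real) set" where
  "DN N = basis_vec ` {..<N}"

definition multilinear_degree_le :: "nat \<Rightarrow> ((nat \<Rightarrow> real) \<Rightarrow> real) \<Rightarrow> nat \<Rightarrow> bool" where
  "multilinear_degree_le N F d \<longleftrightarrow>
     (\<exists>c :: nat set \<Rightarrow> real.
        (\<forall>S. c S \<noteq> 0 \<longrightarrow> S \<subseteq> {..<N} \<and> card S \<le> d) \<and>
        (\<forall>x\<in>cube N. F x = (\<Sum>S\<in>Pow {..<N}. c S * (\<Prod>i\<in>S. x i))))"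

text \<open>Degree of a Boolean function on {0,1}^N = degree of its (unique) multilinear
  representation = least d admitting a multilinear representation of degree \<le> d.\<close>
definition bool_degree :: "nat \<Rightarrow> ((nat \<Rightarrow> real) \<Rightarrow> real) \<Rightarrow> nat" where
  "bool_degree N F = (LEAST d. multilinear_degree_le N F d)"

end

theory Submission
  imports Defs "HOL-Computational_Algebra.Polynomial"
begin


lemma lagrange_interp:
  fixes p :: "real poly" and xs :: "nat \<Rightarrow> real"
  assumes deg: "degree p \<le> d" and inj: "inj_on xs {..d}"
  shows "poly p y = (\<Sum>j\<le>d. poly p (xs j) * (\<Prod>i\<in>{..d}-{j}. (y - xs i) / (xs j - xs i)))"
proof -
  define Lp where "Lp j = (\<Prod>i\<in>{..d}-{j}. [:- xs i / (xs j - xs i), 1 / (xs j - xs i):])" for j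
  have polyL: "poly (Lp j) z = (\<Prod>i\<in>{..d}-{j}. (z - xs i) / (xs j - xs i))" for j z
    unfolding Lp_def poly_prod by (intro prod.cong refl) (simp add: diff_divide_distrib)
  have degL: "degree (Lp j) \<le> d" if "j \<le> d" for j
  proof -
    have "degree (Lp j) \<le> sum (degree \<circ> (\<lambda>i. [:- xs i / (xs j - xs i), 1 / (xs j - xs i):])) ({..d}-{j})"
      unfolding Lp_def by (rule degree_prod_sum_le) auto
    also have "\<dots> \<le> sum (\<lambda>i. 1) ({..d}-{j})"
      by (intro sum_mono) auto
    also have "\<dots> = d" using that by simp
    finally show ?thesis .
  qed
  define r where "r = (\<Sum>j\<le>d. smult (poly p (xs j)) (Lp j))"
  have degr: "degree r \<le> d"
    unfolding r_def by (intro degree_sum_le) (auto intro: order.trans[OF degree_smult_le] degL)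
  have Lnode: "poly (Lp j) (xs m) = (if j = m then 1 else 0)" if "j \<le> d" "m \<le> d" for j m
  proof (cases "j = m")
    case True
    have "poly (Lp j) (xs m) = (\<Prod>i\<in>{..d}-{j}. 1)"
      unfolding polyL True
      by (intro prod.cong refl) (use inj that in \<open>auto simp: inj_on_def\<close>)
    then show ?thesis using True by simp
  next
    case False
    have "m \<in> {..d}-{j}" using False that by auto
    then have "poly (Lp j) (xs m) = 0"
      unfolding polyL by (intro prod_zero) auto
    then show ?thesis using False by simp
  qed
  have "p = r"
  proof (rule poly_eqI_degree[where A = "xs ` {..d}"])
    fix x assume "x \<in> xs ` {..d}"
    then obtain m where m: "m \<le> d" "x = xs m" by auto
    have "poly r x = (\<Sum>j\<le>d. poly p (xs j) * (if j = m then 1 else 0))"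
      unfolding r_def poly_sum poly_smult m(2) by (intro sum.cong refl) (simp add: Lnode m(1))
    also have "\<dots> = poly p x" using m by (simp add: if_distrib[of "\<lambda>t. _ * t"] sum.delta cong: if_cong)
    finally show "poly p x = poly r x" by simp
  next
    have "card (xs ` {..d}) = Suc d" using inj by (simp add: card_image)
    then show "degree p < card (xs ` {..d})" "degree r < card (xs ` {..d})" using deg degr by auto
  qed
  have "poly p y = poly r y" using \<open>p = r\<close> by simp
  also have "\<dots> = (\<Sum>j\<le>d. poly p (xs j) * (\<Prod>i\<in>{..d}-{j}. (y - xs i) / (xs j - xs i)))"
    unfolding r_def poly_sum poly_smult polyL ..
  finally show ?thesis .
qed



lemma prod_dist_fact:
  assumes "j \<le> d"
  shows "(\<Prod>i\<in>{..d}-{j}. \<bar>real j - real i\<bar>) = fact j * fact (d - j)"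
  using assms
proof (induction d rule: dec_induct)
  case base
  have "{..j}-{j} = {..<j}" by auto
  then have "(\<Prod>i\<in>{..j}-{j}. \<bar>real j - real i\<bar>) = (\<Prod>i<j. real (j - i))"
    by (auto intro!: prod.cong simp: of_nat_diff)
  also have "\<dots> = fact j" unfolding fact_prod_rev[of j] by (simp add: atLeast0LessThan)
  finally show ?case by simp
next
  case (step n)
  have "{..Suc n}-{j} = insert (Suc n) ({..n}-{j})" using step by auto
  then have "(\<Prod>i\<in>{..Suc n}-{j}. \<bar>real j - real i\<bar>) = \<bar>real j - real (Suc n)\<bar> * (\<Prod>i\<in>{..n}-{j}. \<bar>real j - real i\<bar>)"
    by simp
  also have "\<dots> = real (Suc n - j) * (fact j * fact (n - j))" using step by (simp add: of_nat_diff)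
  also have "\<dots> = fact j * fact (Suc n - j)"
    using step by (simp add: Suc_diff_le)
  finally show ?case .
qed

lemma prod_g:
  fixes h :: real
  assumes "1 \<le> j" "j \<le> d"
  shows "(\<Prod>i\<in>{..d}-{j}. (if i = 0 then 1 else real i * h)) = h ^ (d - 1) * (fact d / real j)"
proof -
  have e: "{..d}-{j} = insert 0 ({1..d}-{j})" using assms by auto
  have "(\<Prod>i\<in>{..d}-{j}. (if i = 0 then 1 else real i * h)) = (\<Prod>i\<in>{1..d}-{j}. real i * h)"
    unfolding e by (subst prod.insert) (auto intro!: prod.cong)
  also have "\<dots> = h ^ card ({1..d}-{j}) * (\<Prod>i\<in>{1..d}-{j}. real i)"
    by (simp add: prod.distrib mult.commute)
  also have "card ({1..d}-{j}) = d - 1" using assms by simp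
  also have "(\<Prod>i\<in>{1..d}-{j}. real i) = fact d / real j"
  proof -
    have "fact d = (\<Prod>i\<in>{1..d}. real i)" by (simp add: fact_prod)
    also have "\<dots> = real j * (\<Prod>i\<in>{1..d}-{j}. real i)"
      using assms by (subst prod.remove[of _ j]) auto
    finally show ?thesis using assms by simp
  qed
  finally show ?thesis .
qed

lemma lagr_bound:
  fixes h :: real
  assumes h: "1 \<le> h" and j: "1 \<le> j" "j \<le> d"
  shows "\<bar>\<Prod>i\<in>{..d}-{j}. (1 - real i * h) / (real j * h - real i * h)\<bar> \<le> real (d choose j) / h"
proof -
  have "\<bar>\<Prod>i\<in>{..d}-{j}. (1 - real i * h) / (real j * h - real i * h)\<bar>
      = (\<Prod>i\<in>{..d}-{j}. \<bar>1 - real i * h\<bar>) / (\<Prod>i\<in>{..d}-{j}. \<bar>real j - real i\<bar> * h)"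
    using h by (simp add: abs_prod prod_dividef abs_mult left_diff_distrib[symmetric])
  also have "(\<Prod>i\<in>{..d}-{j}. \<bar>real j - real i\<bar> * h) = h ^ d * (fact j * fact (d - j))"
    using j by (simp add: prod.distrib prod_dist_fact mult.commute)
  also have "(\<Prod>i\<in>{..d}-{j}. \<bar>1 - real i * h\<bar>) \<le> (\<Prod>i\<in>{..d}-{j}. (if i = 0 then 1 else real i * h))"
  proof (intro prod_mono conjI)
    fix i assume "i \<in> {..d}-{j}"
    show "0 \<le> \<bar>1 - real i * h\<bar>" by simp
    show "\<bar>1 - real i * h\<bar> \<le> (if i = 0 then 1 else real i * h)"
    proof (cases "i = 0")
      case False
      then have "1 \<le> real i" by simp
      then have "1 \<le> real i * h" using h by (metis mult_mono' mult_1 zero_le_one)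
      then show ?thesis using False by simp
    qed simp
  qed
  also have "(\<Prod>i\<in>{..d}-{j}. (if i = 0 then 1 else real i * h)) = h ^ (d - 1) * (fact d / real j)"
    by (rule prod_g[OF j])
  finally have le: "\<bar>\<Prod>i\<in>{..d}-{j}. (1 - real i * h) / (real j * h - real i * h)\<bar>
      \<le> h ^ (d - 1) * (fact d / real j) / (h ^ d * (fact j * fact (d - j)))"
    using h by (simp add: divide_right_mono)
  have hd: "h ^ d = h * h ^ (d - 1)" using j by (cases d) auto
  have "h ^ (d - 1) * (fact d / real j) / (h ^ d * (fact j * fact (d - j)))
      = (fact d / (fact j * fact (d - j))) / (real j * h)"
    unfolding hd using h j by (simp add: field_simps)
  also have "\<dots> = real (d choose j) / (real j * h)" using j by (simp add: binomial_fact)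
  also have "\<dots> \<le> real (d choose j) / h"
    using j h by (intro divide_left_mono) auto
  finally show ?thesis using le by linarith
qed



lemma two_d_le: "2 * d \<le> (2::nat) ^ d"
proof (induction d)
  case (Suc d)
  then show ?case by (cases d) auto
qed simp

lemma d_4: "d * (2 ^ d + 1) \<le> (4::nat) ^ d"
proof -
  have "d * (2 ^ d + 1) \<le> d * (2 * 2 ^ d)" by simp
  also have "\<dots> = (2 * d) * 2 ^ d" by simp
  also have "\<dots> \<le> 2 ^ d * 2 ^ d" using two_d_le by simp
  also have "\<dots> = 4 ^ d" by (simp add: power_mult_distrib[symmetric])
  finally show ?thesis .
qed

lemma univ_bound:
  fixes p :: "real poly"
  assumes deg: "degree p \<le> d"
    and vals: "\<And>t. t \<le> k \<Longrightarrow> 0 \<le> poly p (real t) \<and> poly p (real t) \<le> 1"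
    and jump: "\<bar>poly p 1 - poly p 0\<bar> = 1" and k: "1 \<le> k"
  shows "k \<le> 4 ^ d"
proof -
  have d1: "1 \<le> d"
  proof (rule ccontr)
    assume "\<not> 1 \<le> d"
    then have "degree p = 0" using deg by simp
    then have "p = [:coeff p 0:]" by (rule degree_0_id[symmetric])
    then have "poly p 1 = poly p 0" by (metis poly_pCons mult_zero_left add_0_right poly_0 mult_zero_right)
    then show False using jump by simp
  qed
  show ?thesis
  proof (cases "k < d")
    case True
    then have "k \<le> d * (2 ^ d + 1)" using d1 by (metis le_add2 less_imp_le_nat mult.commute mult_le_mono2 nat_mult_1 order.trans one_le_numeral power_increasing  power_0 add_le_mono1 le_add1 one_le_power)
    then show ?thesis using d_4 order.trans by blast
  next
    case False
    define h where "h = k div d"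
    have h1: "1 \<le> h" using False d1 unfolding h_def using div_le_mono[of d k d] by simp
    have dh: "d * h \<le> k" unfolding h_def by simp
    define H where "H = real h"
    have H1: "1 \<le> H" using h1 unfolding H_def by simp
    define q where "q = p - [:poly p 0:]"
    have degq: "degree q \<le> d" unfolding q_def
      using deg by (intro degree_diff_le) auto
    have inj: "inj_on (\<lambda>i. real i * H) {..d}" using H1 by (auto simp: inj_on_def)
    have qv: "\<bar>poly q (real j * H)\<bar> \<le> 1" if "j \<le> d" for j
    proof -
      have "j * h \<le> k" using dh that by (meson mult_le_mono1 order.trans)
      then have "0 \<le> poly p (real (j*h)) \<and> poly p (real (j*h)) \<le> 1" by (rule vals)
      moreover have "0 \<le> poly p (real 0) \<and> poly p (real 0) \<le> 1" by (rule vals) simp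
      ultimately show ?thesis unfolding q_def H_def by (simp add: abs_le_iff)
    qed
    have "poly q 1 = (\<Sum>j\<le>d. poly q (real j * H) * (\<Prod>i\<in>{..d}-{j}. (1 - real i * H) / (real j * H - real i * H)))"
      by (rule lagrange_interp[OF degq inj])
    also have "\<dots> = (\<Sum>j\<in>{1..d}. poly q (real j * H) * (\<Prod>i\<in>{..d}-{j}. (1 - real i * H) / (real j * H - real i * H)))"
    proof -
      have e: "{..d} = insert 0 {1..d}" by auto
      show ?thesis unfolding e by (subst sum.insert) (auto simp: q_def)
    qed
    finally have "\<bar>poly q 1\<bar> \<le> (\<Sum>j\<in>{1..d}. \<bar>poly q (real j * H)\<bar> * \<bar>\<Prod>i\<in>{..d}-{j}. (1 - real i * H) / (real j * H - real i * H)\<bar>)"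
      by (metis (no_types, lifting) abs_mult sum.cong sum_abs)
    also have "\<dots> \<le> (\<Sum>j\<in>{1..d}. 1 * (real (d choose j) / H))"
      by (intro sum_mono mult_mono qv lagr_bound H1) auto
    also have "\<dots> = (\<Sum>j\<in>{1..d}. real (d choose j)) / H" by (simp add: sum_divide_distrib)
    also have "(\<Sum>j\<in>{1..d}. real (d choose j)) \<le> (\<Sum>j\<le>d. real (d choose j))"
      by (intro sum_mono2) auto
    also have "(\<Sum>j\<le>d. real (d choose j)) = 2 ^ d"
      using choose_row_sum[of d] by (metis of_nat_numeral of_nat_power of_nat_sum)
    finally have "\<bar>poly q 1\<bar> \<le> 2 ^ d / H" using H1 by (simp add: divide_right_mono)
    moreover have "\<bar>poly q 1\<bar> = 1" using jump unfolding q_def by simp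
    ultimately have "H \<le> 2 ^ d" using H1 by (simp add: field_simps)
    then have "h \<le> 2 ^ d" unfolding H_def by (metis of_nat_le_iff of_nat_numeral of_nat_power)
    have "k < d * (h + 1)" unfolding h_def using d1
      by (metis add.commute div_mult_mod_eq mod_less_divisor mult.commute nat_add_left_cancel_less distrib_left mult_1_right le_less_trans[OF le_refl] less_le_trans not_le zero_less_one)
    also have "\<dots> \<le> d * (2 ^ d + 1)" using \<open>h \<le> 2 ^ d\<close> by simp
    finally show ?thesis using d_4[of d] by linarith
  qed
qed



definition ind :: "nat set \<Rightarrow> nat \<Rightarrow> real" where
  "ind T = (\<lambda>i. if i \<in> T then 1 else 0)"

lemma prod_ind: "finite S \<Longrightarrow> (\<Prod>i\<in>S. ind T i) = (if S \<subseteq> T then 1 else 0)"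
  unfolding ind_def by (induction S rule: finite_induct) auto

lemma cube_ind: "x \<in> cube N \<Longrightarrow> x = ind {i. i < N \<and> x i = 1}"
  unfolding cube_def ind_def by (rule ext) (auto, metis not_le)

lemma ind_cube: "T \<subseteq> {..<N} \<Longrightarrow> ind T \<in> cube N"
  unfolding cube_def ind_def by auto

lemma exists_rep: "multilinear_degree_le N F N"
proof -
  define G where "G T = F (ind T)" for T
  define g where "g S = (\<Sum>T\<in>Pow S. (-1) ^ card T * G T)" for S
  define c where "c S = (if S \<subseteq> {..<N} then (-1) ^ card S * g S else (0::real))" for S
  have key: "G A = (\<Sum>T\<in>Pow A. (-1) ^ card T * g T)" if "finite A" for A
    by (rule inclusion_exclusion_symmetric[where g = g]) (auto simp: g_def that)
  show ?thesis unfolding multilinear_degree_le_def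
  proof (rule exI[of _ c], rule conjI)
    show "\<forall>S. c S \<noteq> 0 \<longrightarrow> S \<subseteq> {..<N} \<and> card S \<le> N"
      unfolding c_def by (auto split: if_splits dest: card_mono[of "{..<N}", simplified])
  next
    show "\<forall>x\<in>cube N. F x = (\<Sum>S\<in>Pow {..<N}. c S * (\<Prod>i\<in>S. x i))"
    proof
    fix x assume x: "x \<in> cube N"
    define A where "A = {i. i < N \<and> x i = 1}"
    have xA: "x = ind A" using cube_ind[OF x] unfolding A_def .
    have AN: "A \<subseteq> {..<N}" unfolding A_def by auto
    have "(\<Sum>S\<in>Pow {..<N}. c S * (\<Prod>i\<in>S. x i)) = (\<Sum>S\<in>Pow {..<N}. if S \<subseteq> A then c S else 0)"
      unfolding xA by (intro sum.cong refl) (auto simp: prod_ind finite_subset)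
    also have "\<dots> = (\<Sum>S\<in>Pow A. c S)"
    proof -
      have "Pow A \<subseteq> Pow {..<N}" using AN by auto
      then show ?thesis by (simp add: sum.If_cases Int_def Pow_def) (metis (no_types, lifting) AN Collect_cong order.trans)
    qed
    also have "\<dots> = (\<Sum>S\<in>Pow A. (-1) ^ card S * g S)"
      using AN by (intro sum.cong refl) (auto simp: c_def)
    also have "\<dots> = G A" using key[of A] AN by (simp add: finite_subset)
    finally show "F x = (\<Sum>S\<in>Pow {..<N}. c S * (\<Prod>i\<in>S. x i))" unfolding G_def xA by simp
    qed
  qed
qed



lemma count_supersets:
  assumes K: "finite K" and SK: "S \<subseteq> K"
  shows "card {T. T \<subseteq> K \<and> card T = t \<and> S \<subseteq> T} =
         (if card S \<le> t then (card K - card S) choose (t - card S) else 0)"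
proof (cases "card S \<le> t")
  case False
  have e: "{T. T \<subseteq> K \<and> card T = t \<and> S \<subseteq> T} = {}"
  proof (safe)
    fix T assume "T \<subseteq> K" "S \<subseteq> T" "t = card T"
    then have "card S \<le> card T" using K by (meson card_mono finite_subset)
    then show "T \<in> {}" using False \<open>t = card T\<close> by simp
  qed
  show ?thesis unfolding e using False by simp
next
  case True
  have fS: "finite S" using K SK finite_subset by blast
  have eq: "{T. T \<subseteq> K \<and> card T = t \<and> S \<subseteq> T} = (\<lambda>U. U \<union> S) ` {U. U \<subseteq> K - S \<and> card U = t - card S}"
  proof
    show "{T. T \<subseteq> K \<and> card T = t \<and> S \<subseteq> T} \<subseteq> (\<lambda>U. U \<union> S) ` {U. U \<subseteq> K - S \<and> card U = t - card S}"
    proof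
      fix T assume "T \<in> {T. T \<subseteq> K \<and> card T = t \<and> S \<subseteq> T}"
      then have T: "T \<subseteq> K" "S \<subseteq> T" "t = card T" by auto
      have "card (T - S) = card T - card S" using T fS by (simp add: card_Diff_subset)
      moreover have "T = (T - S) \<union> S" using T by auto
      ultimately show "T \<in> (\<lambda>U. U \<union> S) ` {U. U \<subseteq> K - S \<and> card U = t - card S}"
        using T by (intro image_eqI[of _ _ "T - S"]) auto
    qed
    show "(\<lambda>U. U \<union> S) ` {U. U \<subseteq> K - S \<and> card U = t - card S} \<subseteq> {T. T \<subseteq> K \<and> card T = t \<and> S \<subseteq> T}"
    proof
      fix T assume "T \<in> (\<lambda>U. U \<union> S) ` {U. U \<subseteq> K - S \<and> card U = t - card S}"
      then obtain U where U: "U \<subseteq> K - S" "card U = t - card S" "T = U \<union> S" by auto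
      have fU: "finite U" using U K finite_subset by blast
      have "card (U \<union> S) = card U + card S" using U fU fS by (subst card_Un_disjoint) auto
      then have "card T = t" using U True by simp
      then show "T \<in> {T. T \<subseteq> K \<and> card T = t \<and> S \<subseteq> T}" using U SK by auto
    qed
  qed
  have inj: "inj_on (\<lambda>U. U \<union> S) {U. U \<subseteq> K - S \<and> card U = t - card S}"
    by (auto simp: inj_on_def)
  have "card {T. T \<subseteq> K \<and> card T = t \<and> S \<subseteq> T} = card {U. U \<subseteq> K - S \<and> card U = t - card S}"
    unfolding eq by (rule card_image[OF inj])
  also have "\<dots> = card (K - S) choose (t - card S)" using K by (simp add: n_subsets)
  also have "card (K - S) = card K - card S" using SK fS by (simp add: card_Diff_subset)
  finally show ?thesis using True by simp
qed

definition Bp :: "nat \<Rightarrow> real poly" where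
  "Bp s = smult (1 / fact s) (\<Prod>i<s. [:- real i, 1:])"

lemma poly_Bp: "poly (Bp s) (real t) = real (t choose s)"
proof -
  have "poly (Bp s) (real t) = (\<Prod>i<s. real t - real i) / fact s"
    unfolding Bp_def by (simp add: poly_prod)
  also have "\<dots> = real t gchoose s" by (simp add: gbinomial_prod_rev atLeast0LessThan)
  also have "\<dots> = real (t choose s)" by (simp add: binomial_gbinomial)
  finally show ?thesis .
qed

lemma degree_Bp: "degree (Bp s) \<le> s"
proof -
  have "degree (\<Prod>i<s. [:- real i, 1:]) \<le> sum (degree \<circ> (\<lambda>i. [:- real i, 1:])) {..<s}"
    by (rule degree_prod_sum_le) auto
  also have "\<dots> = s" by simp
  finally show ?thesis unfolding Bp_def by (meson degree_smult_le order.trans)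
qed

lemma symmetrize:
  fixes F :: "(nat \<Rightarrow> real) \<Rightarrow> real" and c :: "nat set \<Rightarrow> real"
  assumes supp: "\<forall>S. c S \<noteq> 0 \<longrightarrow> S \<subseteq> {..<N} \<and> card S \<le> d"
    and rep: "\<forall>x\<in>cube N. F x = (\<Sum>S\<in>Pow {..<N}. c S * (\<Prod>i\<in>S. x i))"
    and KN: "K \<subseteq> {..<N}"
  shows "\<exists>Q::real poly. degree Q \<le> d \<and> (\<forall>t \<le> card K. poly Q (real t) =
          (\<Sum>T\<in>{T. T \<subseteq> K \<and> card T = t}. F (ind T)) / real (card K choose t))"
proof -
  define k where "k = card K"
  have K: "finite K" using KN finite_subset by blast
  define co where "co S = (if S \<subseteq> K then c S / real (k choose card S) else 0)" for S
  define Q where "Q = (\<Sum>S\<in>Pow {..<N}. smult (co S) (Bp (card S)))"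
  have degQ: "degree Q \<le> d" unfolding Q_def
  proof (intro degree_sum_le)
    fix S assume "S \<in> Pow {..<N}"
    show "degree (smult (co S) (Bp (card S))) \<le> d"
    proof (cases "c S = 0")
      case True then show ?thesis by (simp add: co_def)
    next
      case False
      then have "card S \<le> d" using supp by auto
      then show ?thesis by (meson degree_smult_le degree_Bp order.trans)
    qed
  qed simp
  have vals: "poly Q (real t) = (\<Sum>T\<in>{T. T \<subseteq> K \<and> card T = t}. F (ind T)) / real (k choose t)"
    if t: "t \<le> k" for t
  proof -
    define Tt where "Tt = {T. T \<subseteq> K \<and> card T = t}"
    have fTt: "finite Tt" unfolding Tt_def using K by simp
    have FT: "F (ind T) = (\<Sum>S\<in>Pow {..<N}. if S \<subseteq> T then c S else 0)" if "T \<in> Tt" for T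
    proof -
      have "ind T \<in> cube N" using that KN unfolding Tt_def by (intro ind_cube) auto
      then have "F (ind T) = (\<Sum>S\<in>Pow {..<N}. c S * (\<Prod>i\<in>S. ind T i))" using rep by blast
      also have "\<dots> = (\<Sum>S\<in>Pow {..<N}. if S \<subseteq> T then c S else 0)"
        by (intro sum.cong refl) (auto simp: prod_ind finite_subset)
      finally show ?thesis .
    qed
    have "(\<Sum>T\<in>Tt. F (ind T)) = (\<Sum>T\<in>Tt. \<Sum>S\<in>Pow {..<N}. if S \<subseteq> T then c S else 0)"
      by (intro sum.cong refl FT)
    also have "\<dots> = (\<Sum>S\<in>Pow {..<N}. \<Sum>T\<in>Tt. if S \<subseteq> T then c S else 0)"
      by (rule sum.swap)
    also have "\<dots> = (\<Sum>S\<in>Pow {..<N}. c S * real (card {T\<in>Tt. S \<subseteq> T}))"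
      by (intro sum.cong refl) (simp add: sum.If_cases fTt Int_def)
    finally have sumeq: "(\<Sum>T\<in>Tt. F (ind T)) = (\<Sum>S\<in>Pow {..<N}. c S * real (card {T\<in>Tt. S \<subseteq> T}))" .
    have kt: "0 < k choose t" using t by simp
    have trm: "c S * real (card {T\<in>Tt. S \<subseteq> T}) / real (k choose t) = co S * real (t choose card S)" for S
    proof (cases "S \<subseteq> K")
      case False
      have e0: "{T\<in>Tt. S \<subseteq> T} = {}" using False unfolding Tt_def by auto
      show ?thesis unfolding e0 using False by (simp add: co_def)
    next
      case True
      have fS: "finite S" using True K finite_subset by blast
      have ce: "{T\<in>Tt. S \<subseteq> T} = {T. T \<subseteq> K \<and> card T = t \<and> S \<subseteq> T}" unfolding Tt_def by auto
      have sk: "card S \<le> k" unfolding k_def using True K by (simp add: card_mono)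
      show ?thesis
      proof (cases "card S \<le> t")
        case False
        then show ?thesis unfolding ce count_supersets[OF K True] using False by (simp add: co_def)
      next
        case le: True
        have cm: "(k choose t) * (t choose card S) = (k choose card S) * ((k - card S) choose (t - card S))"
          using choose_mult[OF le t] .
        have ks: "0 < k choose card S" using sk by simp
        have "real (k choose t) * real (t choose card S) = real (k choose card S) * real ((k - card S) choose (t - card S))"
          using cm by (metis of_nat_mult)
        then show ?thesis unfolding ce count_supersets[OF K True] co_def k_def[symmetric]
          using le True kt ks by (simp add: field_simps)
      qed
    qed
    have "poly Q (real t) = (\<Sum>S\<in>Pow {..<N}. co S * real (t choose card S))"
      unfolding Q_def poly_sum poly_smult poly_Bp ..
    also have "\<dots> = (\<Sum>S\<in>Pow {..<N}. c S * real (card {T\<in>Tt. S \<subseteq> T}) / real (k choose t))"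
      using trm by simp
    also have "\<dots> = (\<Sum>T\<in>Tt. F (ind T)) / real (k choose t)"
      unfolding sumeq by (simp add: sum_divide_distrib)
    finally show ?thesis unfolding Tt_def .
  qed
  show ?thesis using degQ vals unfolding k_def by blast
qed



lemma core:
  fixes F :: "(nat \<Rightarrow> real) \<Rightarrow> real" and c :: "nat set \<Rightarrow> real"
  assumes supp: "\<forall>S. c S \<noteq> 0 \<longrightarrow> S \<subseteq> {..<N} \<and> card S \<le> d"
    and rep: "\<forall>x\<in>cube N. F x = (\<Sum>S\<in>Pow {..<N}. c S * (\<Prod>i\<in>S. x i))"
    and bool: "\<forall>x\<in>cube N. F x \<in> {0, 1}"
    and KN: "K \<subseteq> {..<N}" and Kne: "K \<noteq> {}"
    and flip: "\<forall>i\<in>K. F (basis_vec i) = 1 - F (ind {})"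
  shows "card K \<le> 4 ^ d"
proof -
  obtain Q :: "real poly" where degQ: "degree Q \<le> d" and
    QV: "\<forall>t \<le> card K. poly Q (real t) = (\<Sum>T\<in>{T. T \<subseteq> K \<and> card T = t}. F (ind T)) / real (card K choose t)"
    using symmetrize[OF supp rep KN] by blast
  have K: "finite K" using KN finite_subset by blast
  have k1: "1 \<le> card K" using K Kne by (simp add: Suc_le_eq card_gt_0_iff)
  have vals: "0 \<le> poly Q (real t) \<and> poly Q (real t) \<le> 1" if t: "t \<le> card K" for t
  proof -
    define Tt where "Tt = {T. T \<subseteq> K \<and> card T = t}"
    have fTt: "finite Tt" unfolding Tt_def using K by simp
    have cTt: "card Tt = card K choose t" unfolding Tt_def using K by (simp add: n_subsets)
    have FT: "F (ind T) \<in> {0,1}" if "T \<in> Tt" for T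
      using bool ind_cube[of T N] that KN unfolding Tt_def by auto
    have s0: "0 \<le> (\<Sum>T\<in>Tt. F (ind T))" using FT by (intro sum_nonneg) (metis empty_iff insert_iff order_refl zero_le_one)
    have "(\<Sum>T\<in>Tt. F (ind T)) \<le> (\<Sum>T\<in>Tt. 1)" using FT by (intro sum_mono) (metis empty_iff insert_iff order_refl zero_le_one)
    then have s1: "(\<Sum>T\<in>Tt. F (ind T)) \<le> real (card K choose t)" using cTt by simp
    have pos: "0 < real (card K choose t)" using t by simp
    show ?thesis using QV t s0 s1 pos unfolding Tt_def by (simp add: divide_le_eq_1)
  qed
  have q0: "poly Q 0 = F (ind {})"
  proof -
    have "{T. T \<subseteq> K \<and> card T = 0} = {{}}" using K by (auto dest: finite_subset)
    moreover have "poly Q (real 0) = (\<Sum>T\<in>{T. T \<subseteq> K \<and> card T = 0}. F (ind T)) / real (card K choose 0)"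
      using QV by blast
    ultimately show ?thesis by simp
  qed
  have q1: "poly Q 1 = 1 - F (ind {})"
  proof -
    have e: "{T. T \<subseteq> K \<and> card T = 1} = (\<lambda>i. {i}) ` K" by (auto simp: card_Suc_eq)
    have "(\<Sum>T\<in>{T. T \<subseteq> K \<and> card T = 1}. F (ind T)) = (\<Sum>i\<in>K. F (ind {i}))"
      unfolding e by (subst sum.reindex) (auto simp: inj_on_def)
    also have "\<dots> = (\<Sum>i\<in>K. 1 - F (ind {}))"
    proof (intro sum.cong refl)
      fix i assume "i \<in> K"
      have "ind {i} = basis_vec i" unfolding ind_def basis_vec_def by auto
      then show "F (ind {i}) = 1 - F (ind {})" using flip \<open>i \<in> K\<close> by simp
    qed
    also have "\<dots> = real (card K) * (1 - F (ind {}))" by simp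
    finally have sm: "(\<Sum>T\<in>{T. T \<subseteq> K \<and> card T = 1}. F (ind T)) = real (card K) * (1 - F (ind {}))" .
    have "poly Q (real 1) = (\<Sum>T\<in>{T. T \<subseteq> K \<and> card T = 1}. F (ind T)) / real (card K choose 1)"
      using QV k1 by blast
    then show ?thesis unfolding sm using k1 by simp
  qed
  have "F (ind {}) \<in> {0,1}" using bool ind_cube[of "{}" N] by auto
  then have jump: "\<bar>poly Q 1 - poly Q 0\<bar> = 1" using q0 q1 by auto
  show ?thesis by (rule univ_bound[OF degQ vals jump k1])
qed



lemma ln4_le: "ln (4::real) \<le> 2"
proof -
  have "ln (4::real) = 2 * ln 2" using ln_realpow[of 2 2] by simp
  moreover have "ln (2::real) \<le> 1" using ln_le_minus_one[of 2] by simp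
  ultimately show ?thesis by simp
qed

theorem mainTheorem10:
  shows "\<exists>c>0. \<exists>N0. \<forall>N\<ge>N0. \<exists>a :: nat \<Rightarrow> real.
           (\<forall>x\<in>DN N. (\<Sum>i<N. a i * x i) \<in> {0, 1}) \<and>
           (\<forall>F :: (nat \<Rightarrow> real) \<Rightarrow> real.
              (\<forall>x\<in>cube N. F x \<in> {0, 1}) \<longrightarrow>
              (\<forall>x\<in>DN N. F x = (\<Sum>i<N. a i * x i)) \<longrightarrow>
              real (bool_degree N F) \<ge> c * ln (real N))"
proof (intro exI[of _ "1/4"] conjI exI[of _ 9] allI impI)
  show "(0::real) < 1/4" by simp
  fix N :: nat assume N9: "9 \<le> N"
  define m where "m = N div 2"
  define a where "a i = (if i < m then 1 else (0::real))" for i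
  have sum_a: "(\<Sum>i<N. a i * basis_vec j i) = a j" if "j < N" for j
  proof -
    have "(\<Sum>i<N. a i * basis_vec j i) = (\<Sum>i<N. if i = j then a j else 0)"
      by (intro sum.cong refl) (simp add: basis_vec_def)
    also have "\<dots> = a j" using that by simp
    finally show ?thesis .
  qed
  show "\<exists>a :: nat \<Rightarrow> real. (\<forall>x\<in>DN N. (\<Sum>i<N. a i * x i) \<in> {0, 1}) \<and>
           (\<forall>F :: (nat \<Rightarrow> real) \<Rightarrow> real.
              (\<forall>x\<in>cube N. F x \<in> {0, 1}) \<longrightarrow>
              (\<forall>x\<in>DN N. F x = (\<Sum>i<N. a i * x i)) \<longrightarrow>
              real (bool_degree N F) \<ge> 1/4 * ln (real N))"
  proof (intro exI[of _ a] conjI allI impI)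
    show "\<forall>x\<in>DN N. (\<Sum>i<N. a i * x i) \<in> {0, 1}"
      unfolding DN_def using sum_a by (auto simp: a_def)
  next
    fix F :: "(nat \<Rightarrow> real) \<Rightarrow> real"
    assume bool: "\<forall>x\<in>cube N. F x \<in> {0, 1}" and agree: "\<forall>x\<in>DN N. F x = (\<Sum>i<N. a i * x i)"
    define d where "d = bool_degree N F"
    have "multilinear_degree_le N F d"
      unfolding d_def bool_degree_def by (rule LeastI[of _ N]) (rule exists_rep)
    then obtain c where supp: "\<forall>S. c S \<noteq> 0 \<longrightarrow> S \<subseteq> {..<N} \<and> card S \<le> d"
      and rep: "\<forall>x\<in>cube N. F x = (\<Sum>S\<in>Pow {..<N}. c S * (\<Prod>i\<in>S. x i))"
      unfolding multilinear_degree_le_def by blast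
    have Fe: "F (basis_vec j) = a j" if "j < N" for j
      using agree sum_a[OF that] that unfolding DN_def by auto
    have F0: "F (ind {}) \<in> {0,1}" using bool ind_cube[of "{}" N] by auto
    have m4: "4 \<le> m" using N9 unfolding m_def by simp
    have mN: "m \<le> N" unfolding m_def by simp
    obtain K where KN: "K \<subseteq> {..<N}" and Kne: "K \<noteq> {}" and mK: "m \<le> card K"
      and flip: "\<forall>i\<in>K. F (basis_vec i) = 1 - F (ind {})"
    proof (cases "F (ind {}) = 0")
      case True
      show ?thesis
        by (rule that[of "{..<m}"]) (use True m4 mN Fe in \<open>auto simp: a_def lessThan_empty_iff\<close>)
    next
      case False
      then have "F (ind {}) = 1" using F0 by simp
      moreover have "m \<le> card {m..<N}" unfolding m_def by simp
      ultimately show ?thesis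
        by (intro that[of "{m..<N}"]) (use m4 mN Fe in \<open>auto simp: a_def\<close>)
    qed
    have "card K \<le> 4 ^ d" by (rule core[OF supp rep bool KN Kne flip])
    then have m4d: "m \<le> 4 ^ d" using mK by simp
    have d1: "1 \<le> d"
    proof (rule ccontr)
      assume "\<not> 1 \<le> d" then have "d = 0" by simp
      then show False using m4d m4 by simp
    qed
    have "N \<le> 3 * m" unfolding m_def using N9 by simp
    also have "\<dots> \<le> 4 * 4 ^ d" using m4d by simp
    finally have "real N \<le> 4 ^ (d + 1)" by (metis of_nat_le_iff of_nat_numeral of_nat_power power_Suc Suc_eq_plus1)
    then have "ln (real N) \<le> ln (4 ^ (d + 1))" using N9 by (subst ln_le_cancel_iff) auto
    also have "\<dots> = real (d + 1) * ln 4" by (rule ln_realpow)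
    also have "\<dots> \<le> real (d + 1) * 2" using ln4_le by (intro mult_left_mono) auto
    finally have "ln (real N) \<le> 4 * real d" using d1 by simp
    then show "1/4 * ln (real N) \<le> real (bool_degree N F)" unfolding d_def by simp
  qed
qed


end
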